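(* Let $\beta>0$, $\mu_x,\mu_y\in\mathbb{R}$, and let $X\sim\mathrm{MaxGumbel}(\mu_x,\beta)$ and $Y\sim\mathrm{MinGumbel}(\mu_y,\beta)$ be independent. Then $$\mathbb{E}\big[\max(Y-X,0)\big]=2\beta\,K_0\!\left(2e^{-\frac{\mu_y-\mu_x}{2\beta}}\right),$$ where $K_0$ is the modified Bessel function of the second kind of order $0$.
   Context: $\mathrm{MaxGumbel}(\mu,\beta)$ denotes the distribution on $\mathbb{R}$ with density $\frac1\beta\exp\!\big(-\tfrac{x-\mu}{\beta}-e^{-(x-\mu)/\beta}\big)$; $\mathrm{MinGumbel}(\mu,\beta)$ denotes the distribution with density $\frac1\beta\exp\!\big(\tfrac{x-\mu}{\beta}-e^{(x-\mu)/\beta}\big)$ (the law of $-Z$ for $Z\sim\mathrm{MaxGumbel}(-\mu,\beta)$). $K_0(z)=\int_0^\infty e^{-z\cosh t}\,dt$ for $z>0$. *)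

theory Defs
  imports "HOL-Probability.Probability"
begin

definition max_gumbel_density :: "real \<Rightarrow> real \<Rightarrow> real \<Rightarrow> real" where
  "max_gumbel_density mu beta x = (1 / beta) * exp (- ((x - mu) / beta) - exp (- ((x - mu) / beta)))"

definition min_gumbel_density :: "real \<Rightarrow> real \<Rightarrow> real \<Rightarrow> real" where
  "min_gumbel_density mu beta x = (1 / beta) * exp ((x - mu) / beta - exp ((x - mu) / beta))"

definition besselK0 :: "real \<Rightarrow> real" where
  "besselK0 z = (LBINT t:{0..}. exp (- z * cosh t))"

end

theory Submission
  imports Defs
begin

lemma surv:
  assumes b: "beta > 0"
  shows "(\<integral>\<^sup>+y\<in>{t..}. ennreal (min_gumbel_density mu beta y) \<partial>lborel) = ennreal (exp (- exp ((t - mu) / beta)))"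
proof -
  have "(\<integral>\<^sup>+y\<in>{t..}. ennreal (min_gumbel_density mu beta y) \<partial>lborel) = ennreal (0 - (- exp (- exp ((t - mu) / beta))))"
  proof (rule nn_integral_FTC_atLeast)
    show "min_gumbel_density mu beta \<in> borel_measurable borel"
      unfolding min_gumbel_density_def by measurable
    fix x
    show "((\<lambda>y. - exp (- exp ((y - mu) / beta))) has_real_derivative min_gumbel_density mu beta x) (at x)"
    proof -
      have eq: "exp ((x-mu)/beta - exp ((x-mu)/beta)) = exp (- exp((x-mu)/beta)) * exp ((x-mu)/beta)"
        by (simp add: exp_diff exp_minus field_simps)
      show ?thesis unfolding min_gumbel_density_def eq
        using b by (auto intro!: derivative_eq_intros simp: field_simps)
    qed
    show "0 \<le> min_gumbel_density mu beta x" unfolding min_gumbel_density_def using b by simp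
  next
    show "((\<lambda>y. - exp (- exp ((y - mu) / beta))) \<longlongrightarrow> 0) at_top"
      using b by real_asymp
  qed
  then show ?thesis by simp
qed

lemma cdf:
  assumes b: "beta > 0"
  shows "(\<integral>\<^sup>+x\<in>{..t}. ennreal (max_gumbel_density mu beta x) \<partial>lborel) = ennreal (exp (- exp (- (t - mu) / beta)))"
proof -
  have e: "\<And>x. - ((- x - mu) / beta) = (x + mu) / beta" using b by (simp add: field_simps)
  have "(\<integral>\<^sup>+x\<in>{..t}. ennreal (max_gumbel_density mu beta x) \<partial>lborel)
      = ennreal \<bar>-1::real\<bar> * (\<integral>\<^sup>+x. ennreal (max_gumbel_density mu beta (0 + (-1) * x)) * indicator {..t} (0 + (-1) * x) \<partial>lborel)"
    by (rule nn_integral_real_affine[where f="\<lambda>x. ennreal (max_gumbel_density mu beta x) * indicator {..t} x"]) (auto simp: max_gumbel_density_def)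
  also have "\<dots> = (\<integral>\<^sup>+y\<in>{-t..}. ennreal (min_gumbel_density (-mu) beta y) \<partial>lborel)"
    using b by (simp, intro nn_integral_cong) (auto simp: e max_gumbel_density_def min_gumbel_density_def indicator_def)
  also have "\<dots> = ennreal (exp (- exp ((-t - -mu) / beta)))" by (rule surv[OF b])
  finally show ?thesis by (simp add: minus_divide_left)
qed

lemma expint:
  assumes w: "w > (0::real)"
  shows "(\<integral>\<^sup>+s\<in>{0..}. ennreal (exp (- w * s)) \<partial>lborel) = ennreal (1 / w)"
proof -
  have "(\<integral>\<^sup>+s\<in>{0..}. ennreal (exp (- w * s)) \<partial>lborel) = ennreal (0 - (- exp (- w * 0) / w))"
  proof (rule nn_integral_FTC_atLeast)
    show "(\<lambda>s. exp (- w * s)) \<in> borel_measurable borel" by measurable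
    fix x :: real
    show "((\<lambda>s. - exp (- w * s) / w) has_real_derivative exp (- w * x)) (at x)"
      using w by (auto intro!: derivative_eq_intros simp: field_simps)
    show "0 \<le> exp (- w * x)" by simp
  next
    show "((\<lambda>s. - exp (- w * s) / w) \<longlongrightarrow> 0) at_top" using w by real_asymp
  qed
  then show ?thesis by simp
qed

lemma k0:
  assumes z: "z > (0::real)"
  shows "(\<integral>\<^sup>+s\<in>{0..}. ennreal (exp (- z * cosh s)) \<partial>lborel) = ennreal (besselK0 z)"
proof -
  have le: "exp (- z * cosh s) \<le> exp (- (z/2) * s)" for s :: real
  proof -
    have a: "1 + s \<le> exp s" by (rule exp_ge_add_one_self)
    have c: "0 < exp (-s)" by simp
    have "s/2 \<le> cosh s" unfolding cosh_def by (simp add: divide_simps) (use a c in linarith)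
    then have "z * (s/2) \<le> z * cosh s" using z by (intro mult_left_mono) auto
    then show ?thesis by simp
  qed
  have "(\<integral>\<^sup>+s\<in>{0..}. ennreal (exp (- z * cosh s)) \<partial>lborel) \<le> (\<integral>\<^sup>+s\<in>{0..}. ennreal (exp (- (z/2) * s)) \<partial>lborel)"
    by (intro nn_integral_mono mult_right_mono ennreal_leI le) auto
  also have "\<dots> = ennreal (1 / (z/2))" by (rule expint) (use z in simp)
  finally have fin: "(\<integral>\<^sup>+s\<in>{0..}. ennreal (exp (- z * cosh s)) \<partial>lborel) < \<infinity>"
    using le_less_trans by fastforce
  have eq: "(\<integral>\<^sup>+s. ennreal (indicator {0..} s *\<^sub>R exp (- z * cosh s)) \<partial>lborel)
      = (\<integral>\<^sup>+s\<in>{0..}. ennreal (exp (- z * cosh s)) \<partial>lborel)"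
    by (intro nn_integral_cong) (auto simp: indicator_def)
  have int: "integrable lborel (\<lambda>s. indicator {0..} s *\<^sub>R exp (- z * cosh s))"
  proof (rule integrableI_nonneg)
    have [measurable]: "(\<lambda>s::real. exp (- z * cosh s)) \<in> borel_measurable borel"
      by (intro borel_measurable_continuous_onI continuous_intros)
    show "(\<lambda>s. indicator {0..} s *\<^sub>R exp (- z * cosh s)) \<in> borel_measurable lborel" by measurable
  qed (use fin eq in auto)
  have "(\<integral>\<^sup>+s. ennreal (indicator {0..} s *\<^sub>R exp (- z * cosh s)) \<partial>lborel) = ennreal (besselK0 z)"
    unfolding besselK0_def set_lebesgue_integral_def
    by (rule nn_integral_eq_integral[OF int]) auto
  with eq show ?thesis by simp
qed

lemma symm:
  "(\<integral>\<^sup>+s. ennreal (exp (- z * cosh s)) \<partial>lborel) = 2 * (\<integral>\<^sup>+s\<in>{0..}. ennreal (exp (- z * cosh s)) \<partial>lborel)"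
proof -
  have [measurable]: "(\<lambda>s::real. exp (- z * cosh s)) \<in> borel_measurable borel"
    by (intro borel_measurable_continuous_onI continuous_intros)
  have m2: "(\<lambda>s. ennreal (exp (- z * cosh s)) * indicator {..0} s) \<in> borel_measurable borel" by measurable
  have "(\<integral>\<^sup>+s. ennreal (exp (- z * cosh s)) \<partial>lborel)
     = (\<integral>\<^sup>+s. ennreal (exp (- z * cosh s)) * indicator {0..} s + ennreal (exp (- z * cosh s)) * indicator {..0} s \<partial>lborel)"
    by (intro nn_integral_cong_AE eventually_mono[OF AE_lborel_singleton[of 0]]) (auto simp: indicator_def)
  also have "\<dots> = (\<integral>\<^sup>+s\<in>{0..}. ennreal (exp (- z * cosh s)) \<partial>lborel) + (\<integral>\<^sup>+s\<in>{..0}. ennreal (exp (- z * cosh s)) \<partial>lborel)"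
    by (rule nn_integral_add; measurable)
  also have "(\<integral>\<^sup>+s\<in>{..0}. ennreal (exp (- z * cosh s)) \<partial>lborel)
      = ennreal \<bar>-1::real\<bar> * (\<integral>\<^sup>+s. ennreal (exp (- z * cosh (0 + (-1) * s))) * indicator {..0} (0 + (-1) * s) \<partial>lborel)"
    by (rule nn_integral_real_affine[where f="\<lambda>s. ennreal (exp (- z * cosh s)) * indicator {..0} s"]) (rule m2, simp)
  also have "\<dots> = (\<integral>\<^sup>+s\<in>{0..}. ennreal (exp (- z * cosh s)) \<partial>lborel)"
    by (simp, intro nn_integral_cong) (auto simp: indicator_def)
  finally show ?thesis by (simp add: mult_2)
qed

lemma maxind: "ennreal (max (y - x) 0) = (\<integral>\<^sup>+t. of_bool (x \<le> t \<and> t \<le> (y::real)) \<partial>lborel)"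
proof -
  have "(\<integral>\<^sup>+t. of_bool (x \<le> t \<and> t \<le> y) \<partial>lborel) = (\<integral>\<^sup>+t. indicator {x..y} t \<partial>lborel)"
    by (intro nn_integral_cong) (auto simp: indicator_def)
  also have "\<dots> = emeasure lborel {x..y}" by simp
  finally show ?thesis by (simp add: emeasure_lborel_Icc_eq max_def)
qed

lemma inner:
  assumes b: "beta > 0"
  shows "(\<integral>\<^sup>+y. ennreal (min_gumbel_density mu beta y) * ennreal (max (y - x) 0) \<partial>lborel)
       = (\<integral>\<^sup>+t\<in>{x..}. ennreal (exp (- exp ((t - mu) / beta))) \<partial>lborel)"
proof -
  have [measurable]: "min_gumbel_density mu beta \<in> borel_measurable borel"
    unfolding min_gumbel_density_def by measurable
  have "(\<integral>\<^sup>+y. ennreal (min_gumbel_density mu beta y) * ennreal (max (y - x) 0) \<partial>lborel)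
      = (\<integral>\<^sup>+y. (\<integral>\<^sup>+t. ennreal (min_gumbel_density mu beta y) * of_bool (x \<le> t \<and> t \<le> y) \<partial>lborel) \<partial>lborel)"
    unfolding maxind by (intro nn_integral_cong nn_integral_cmult[symmetric]) measurable
  also have "\<dots> = (\<integral>\<^sup>+t. (\<integral>\<^sup>+y. ennreal (min_gumbel_density mu beta y) * of_bool (x \<le> t \<and> t \<le> y) \<partial>lborel) \<partial>lborel)"
    by (rule lborel_pair.Fubini') measurable
  also have "\<dots> = (\<integral>\<^sup>+t. indicator {x..} t * (\<integral>\<^sup>+y\<in>{t..}. ennreal (min_gumbel_density mu beta y) \<partial>lborel) \<partial>lborel)"
  proof (intro nn_integral_cong)
    fix t :: real
    have "(\<integral>\<^sup>+y. ennreal (min_gumbel_density mu beta y) * of_bool (x \<le> t \<and> t \<le> y) \<partial>lborel)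
        = (\<integral>\<^sup>+y. indicator {x..} t * (ennreal (min_gumbel_density mu beta y) * indicator {t..} y) \<partial>lborel)"
      by (intro nn_integral_cong) (auto simp: indicator_def)
    also have "\<dots> = indicator {x..} t * (\<integral>\<^sup>+y\<in>{t..}. ennreal (min_gumbel_density mu beta y) \<partial>lborel)"
      by (rule nn_integral_cmult) measurable
    finally show "(\<integral>\<^sup>+y. ennreal (min_gumbel_density mu beta y) * of_bool (x \<le> t \<and> t \<le> y) \<partial>lborel) = \<dots>" .
  qed
  also have "\<dots> = (\<integral>\<^sup>+t\<in>{x..}. ennreal (exp (- exp ((t - mu) / beta))) \<partial>lborel)"
    by (intro nn_integral_cong) (subst surv[OF b], rule mult.commute)
  finally show ?thesis .
qed

lemma outer:
  assumes b: "beta > 0"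
  shows "(\<integral>\<^sup>+x. ennreal (max_gumbel_density mux beta x) * (\<integral>\<^sup>+t\<in>{x..}. ennreal (exp (- exp ((t - muy) / beta))) \<partial>lborel) \<partial>lborel)
       = (\<integral>\<^sup>+t. ennreal (exp (- exp ((t - muy) / beta))) * ennreal (exp (- exp (- (t - mux) / beta))) \<partial>lborel)"
proof -
  have [measurable]: "max_gumbel_density mux beta \<in> borel_measurable borel"
    unfolding max_gumbel_density_def by measurable
  have "(\<integral>\<^sup>+x. ennreal (max_gumbel_density mux beta x) * (\<integral>\<^sup>+t\<in>{x..}. ennreal (exp (- exp ((t - muy) / beta))) \<partial>lborel) \<partial>lborel)
     = (\<integral>\<^sup>+x. (\<integral>\<^sup>+t. ennreal (max_gumbel_density mux beta x) * (ennreal (exp (- exp ((t - muy) / beta))) * of_bool (x \<le> t)) \<partial>lborel) \<partial>lborel)"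
  proof (intro nn_integral_cong)
    fix x :: real
    have "(\<integral>\<^sup>+t\<in>{x..}. ennreal (exp (- exp ((t - muy) / beta))) \<partial>lborel)
       = (\<integral>\<^sup>+t. ennreal (exp (- exp ((t - muy) / beta))) * of_bool (x \<le> t) \<partial>lborel)"
      by (intro nn_integral_cong) (auto simp: indicator_def)
    then show "ennreal (max_gumbel_density mux beta x) * (\<integral>\<^sup>+t\<in>{x..}. ennreal (exp (- exp ((t - muy) / beta))) \<partial>lborel)
       = (\<integral>\<^sup>+t. ennreal (max_gumbel_density mux beta x) * (ennreal (exp (- exp ((t - muy) / beta))) * of_bool (x \<le> t)) \<partial>lborel)"
      by (simp only:) (rule nn_integral_cmult[symmetric], measurable)
  qed
  also have "\<dots> = (\<integral>\<^sup>+t. (\<integral>\<^sup>+x. ennreal (max_gumbel_density mux beta x) * (ennreal (exp (- exp ((t - muy) / beta))) * of_bool (x \<le> t)) \<partial>lborel) \<partial>lborel)"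
    by (rule lborel_pair.Fubini'[symmetric]) measurable
  also have "\<dots> = (\<integral>\<^sup>+t. ennreal (exp (- exp ((t - muy) / beta))) * (\<integral>\<^sup>+x\<in>{..t}. ennreal (max_gumbel_density mux beta x) \<partial>lborel) \<partial>lborel)"
  proof (intro nn_integral_cong)
    fix t :: real
    have "(\<integral>\<^sup>+x. ennreal (max_gumbel_density mux beta x) * (ennreal (exp (- exp ((t - muy) / beta))) * of_bool (x \<le> t)) \<partial>lborel)
       = (\<integral>\<^sup>+x. ennreal (exp (- exp ((t - muy) / beta))) * (ennreal (max_gumbel_density mux beta x) * indicator {..t} x) \<partial>lborel)"
      by (intro nn_integral_cong) (auto simp: indicator_def mult.commute)
    also have "\<dots> = ennreal (exp (- exp ((t - muy) / beta))) * (\<integral>\<^sup>+x\<in>{..t}. ennreal (max_gumbel_density mux beta x) \<partial>lborel)"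
      by (rule nn_integral_cmult) measurable
    finally show "(\<integral>\<^sup>+x. ennreal (max_gumbel_density mux beta x) * (ennreal (exp (- exp ((t - muy) / beta))) * of_bool (x \<le> t)) \<partial>lborel) = \<dots>" .
  qed
  also have "\<dots> = (\<integral>\<^sup>+t. ennreal (exp (- exp ((t - muy) / beta))) * ennreal (exp (- exp (- (t - mux) / beta))) \<partial>lborel)"
    by (intro nn_integral_cong) (subst cdf[OF b], rule refl)
  finally show ?thesis .
qed

lemma affine:
  assumes b: "beta > 0"
  shows "(\<integral>\<^sup>+t. ennreal (exp (- exp ((t - muy) / beta))) * ennreal (exp (- exp (- (t - mux) / beta))) \<partial>lborel)
       = ennreal beta * (\<integral>\<^sup>+s. ennreal (exp (- (2 * exp (- (muy - mux) / (2 * beta))) * cosh s)) \<partial>lborel)"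
proof -
  let ?g = "\<lambda>t. ennreal (exp (- exp ((t - muy) / beta))) * ennreal (exp (- exp (- (t - mux) / beta)))"
  have "(\<integral>\<^sup>+t. ?g t \<partial>lborel) = ennreal \<bar>beta\<bar> * (\<integral>\<^sup>+s. ?g ((mux + muy)/2 + beta * s) \<partial>lborel)"
    by (rule nn_integral_real_affine) (use b in auto)
  also have "(\<lambda>s. ?g ((mux + muy)/2 + beta * s)) = (\<lambda>s. ennreal (exp (- (2 * exp (- (muy - mux) / (2 * beta))) * cosh s)))"
  proof
    fix s :: real
    let ?d = "(muy - mux) / (2 * beta)"
    have e1: "((mux + muy)/2 + beta * s - muy) / beta = s - ?d" using b by (simp add: field_simps)
    have e2: "- ((mux + muy)/2 + beta * s - mux) / beta = - s - ?d" using b by (simp add: field_simps)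
    have e3: "- (muy - mux) / (2 * beta) = - ?d" by (rule minus_divide_left[symmetric])
    have "?g ((mux + muy)/2 + beta * s) = ennreal (exp (- exp (s - ?d)) * exp (- exp (- s - ?d)))"
      unfolding e1 e2 by (simp add: ennreal_mult)
    also have "exp (- exp (s - ?d)) * exp (- exp (- s - ?d)) = exp (- (2 * exp (- ?d)) * cosh s)"
    proof -
      have h: "exp (s - ?d) + exp (- s - ?d) = 2 * exp (- ?d) * cosh s"
        by (simp add: cosh_def exp_diff exp_minus field_simps)
      have "exp (- exp (s - ?d)) * exp (- exp (- s - ?d)) = exp (- (exp (s - ?d) + exp (- s - ?d)))"
        by (simp add: exp_add[symmetric])
      then show ?thesis unfolding h by simp
    qed
    finally show "?g ((mux + muy)/2 + beta * s) = ennreal (exp (- (2 * exp (- (muy - mux) / (2 * beta))) * cosh s))"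
      unfolding e3 .
  qed
  finally show ?thesis using b by simp
qed

theorem mainTheorem2:
  fixes M :: "'a measure" and X Y :: "'a \<Rightarrow> real"
    and beta mu_x mu_y :: real
  assumes "prob_space M"
    and "beta > 0"
    and "distributed M lborel X (\<lambda>x. ennreal (max_gumbel_density mu_x beta x))"
    and "distributed M lborel Y (\<lambda>y. ennreal (min_gumbel_density mu_y beta y))"
    and "prob_space.indep_var M borel X borel Y"
  shows "integrable M (\<lambda>\<omega>. max (Y \<omega> - X \<omega>) 0) \<and>
         (\<integral>\<omega>. max (Y \<omega> - X \<omega>) 0 \<partial>M)
           = 2 * beta * besselK0 (2 * exp (- (mu_y - mu_x) / (2 * beta)))"
proof -
  interpret prob_space M by fact
  note b = assms(2)
  define z where "z = 2 * exp (- (mu_y - mu_x) / (2 * beta))"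
  have z: "z > 0" unfolding z_def by simp
  have K: "0 \<le> besselK0 z" unfolding besselK0_def set_lebesgue_integral_def by (rule Bochner_Integration.integral_nonneg) (simp add: indicator_def)
  have ind: "indep_var lborel X lborel Y"
    using assms(5) unfolding indep_var_def indep_vars_def
    by (simp add: case_bool_if if_distrib cong: if_cong)
  have joint: "distributed M (lborel \<Otimes>\<^sub>M lborel) (\<lambda>x. (X x, Y x))
      (\<lambda>(x, y). ennreal (max_gumbel_density mu_x beta x) * ennreal (min_gumbel_density mu_y beta y))"
    by (rule distributed_joint_indep[OF lborel.sigma_finite_measure_axioms lborel.sigma_finite_measure_axioms assms(3,4) ind])
  have [measurable]: "X \<in> borel_measurable M" "Y \<in> borel_measurable M"
    using assms(3,4) by (auto dest: distributed_measurable)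
  have [measurable]: "max_gumbel_density mu_x beta \<in> borel_measurable borel"
    unfolding max_gumbel_density_def by measurable
  have [measurable]: "min_gumbel_density mu_y beta \<in> borel_measurable borel"
    unfolding min_gumbel_density_def by measurable
  have mmax: "(\<lambda>p. ennreal (max (snd p - fst p) 0)) \<in> borel_measurable (lborel \<Otimes>\<^sub>M lborel)"
    by measurable
  have m3: "(\<lambda>p. ennreal (max_gumbel_density mu_x beta (fst p)) * ennreal (min_gumbel_density mu_y beta (snd p))
            * ennreal (max (snd p - fst p) 0)) \<in> borel_measurable (lborel \<Otimes>\<^sub>M lborel)"
    by measurable
  have "(\<integral>\<^sup>+\<omega>. ennreal (max (Y \<omega> - X \<omega>) 0) \<partial>M)
      = (\<integral>\<^sup>+p. (\<lambda>(x, y). ennreal (max_gumbel_density mu_x beta x) * ennreal (min_gumbel_density mu_y beta y)) p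
            * ennreal (max (snd p - fst p) 0) \<partial>(lborel \<Otimes>\<^sub>M lborel))"
    by (subst distributed_nn_integral[OF joint]) (rule mmax, simp)
  also have "\<dots> = (\<integral>\<^sup>+p. ennreal (max_gumbel_density mu_x beta (fst p)) * ennreal (min_gumbel_density mu_y beta (snd p))
            * ennreal (max (snd p - fst p) 0) \<partial>(lborel \<Otimes>\<^sub>M lborel))"
    by (intro nn_integral_cong) (simp add: case_prod_beta)
  also have "\<dots> = (\<integral>\<^sup>+x. (\<integral>\<^sup>+y. ennreal (max_gumbel_density mu_x beta x) * ennreal (min_gumbel_density mu_y beta y)
            * ennreal (max (y - x) 0) \<partial>lborel) \<partial>lborel)"
    by (subst lborel.nn_integral_fst[symmetric]) (rule m3, simp)
  also have "\<dots> = (\<integral>\<^sup>+x. ennreal (max_gumbel_density mu_x beta x) *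
        (\<integral>\<^sup>+t\<in>{x..}. ennreal (exp (- exp ((t - mu_y) / beta))) \<partial>lborel) \<partial>lborel)"
  proof (intro nn_integral_cong)
    fix x :: real
    show "(\<integral>\<^sup>+y. ennreal (max_gumbel_density mu_x beta x) * ennreal (min_gumbel_density mu_y beta y)
            * ennreal (max (y - x) 0) \<partial>lborel) = ennreal (max_gumbel_density mu_x beta x) *
        (\<integral>\<^sup>+t\<in>{x..}. ennreal (exp (- exp ((t - mu_y) / beta))) \<partial>lborel)"
      unfolding inner[OF b, symmetric] mult.assoc by (rule nn_integral_cmult) measurable
  qed
  also have "\<dots> = ennreal beta * (\<integral>\<^sup>+s. ennreal (exp (- z * cosh s)) \<partial>lborel)"
    unfolding outer[OF b] affine[OF b] z_def ..
  also have "\<dots> = ennreal (2 * beta * besselK0 z)"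
    unfolding symm k0[OF z]
    using b K by (simp add: ennreal_mult mult_ac)
  finally have E: "(\<integral>\<^sup>+\<omega>. ennreal (max (Y \<omega> - X \<omega>) 0) \<partial>M) = ennreal (2 * beta * besselK0 z)" .
  have int: "integrable M (\<lambda>\<omega>. max (Y \<omega> - X \<omega>) 0)"
  proof (rule integrableI_nonneg)
    show "(\<integral>\<^sup>+\<omega>. ennreal (max (Y \<omega> - X \<omega>) 0) \<partial>M) < \<infinity>" unfolding E by simp
  qed auto
  have "ennreal (\<integral>\<omega>. max (Y \<omega> - X \<omega>) 0 \<partial>M) = ennreal (2 * beta * besselK0 z)"
    using nn_integral_eq_integral[OF int] E by simp
  then have "(\<integral>\<omega>. max (Y \<omega> - X \<omega>) 0 \<partial>M) = 2 * beta * besselK0 z"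
    using b K by (subst (asm) ennreal_inj) (auto intro!: integral_nonneg_AE)
  with int show ?thesis unfolding z_def by simp
qed

end
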